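(* Let $k\geq 1$ and let $\zeta_1,\dots,\zeta_k\in(0,1)$ be real numbers such that $1,\zeta_1,\dots,\zeta_k$ are linearly independent over $\mathbb{Q}$. For every integer $s\geq 2$, with $a_n^{i,(s)}$ and $b_n^{(s)}$ as in the context, $$\min_{1\le i\le k}\liminf_{n\to\infty}\left(\frac{a^{i,(s)}_{n+1}}{a^{i,(s)}_n}\right)^{1/k}\ \leq\ \limsup_{n\to\infty}\frac{b^{(s)}_{n+1}}{b^{(s)}_n}\ \leq\ \min_{1\le i\le k}\limsup_{n\to\infty}\frac{a^{i,(s)}_{n+1}}{a^{i,(s)}_n}.$$
   Context: For an integer $s\ge2$, let $a_1^{i,(s)}<a_2^{i,(s)}<\cdots$ be the positions (after the point) of the nonzero digits in the base-$s$ expansion of $\zeta_i$, i.e. $\zeta_i=\sum_{n\ge1}\alpha_{n,i}s^{-a_n^{i,(s)}}$ with digits $0<\alpha_{n,i}\le s-1$. Let $(b_n^{(s)})_{n\ge1}$ be the increasing enumeration of the set $\{a_n^{i,(s)}:1\le i\le k,\ n\ge1\}$. *)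

theory Defs
  imports "HOL-Analysis.Analysis" "HOL-Library.Extended_Real"
begin

text \<open>The n-th digit (n \<ge> 1, after the point) of the base-s expansion of x.
  For irrational x in (0,1) the expansion is unique and this is it.\<close>
definition digit :: "nat \<Rightarrow> real \<Rightarrow> nat \<Rightarrow> int" where
  "digit s x n = \<lfloor>real s ^ n * x\<rfloor> mod int s"

definition nzpos :: "nat \<Rightarrow> real \<Rightarrow> nat set" where
  "nzpos s x = {n. n \<ge> 1 \<and> digit s x n \<noteq> 0}"

text \<open>a_n^{i,(s)}: increasing enumeration (0-indexed: a s x 0 is the first position).\<close>
definition apos :: "nat \<Rightarrow> real \<Rightarrow> nat \<Rightarrow> nat" where
  "apos s x = enumerate (nzpos s x)"

definition bpos :: "nat \<Rightarrow> nat \<Rightarrow> (nat \<Rightarrow> real) \<Rightarrow> nat \<Rightarrow> nat" where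
  "bpos s k \<zeta> = enumerate (\<Union>i\<in>{1..k}. nzpos s (\<zeta> i))"

end

theory Submission
  imports Defs
begin


lemma limsup_le_shift:
  fixes f g :: "nat \<Rightarrow> ereal"
  assumes "\<forall>M. \<exists>N. \<forall>n\<ge>N. \<exists>m\<ge>M. f n \<le> g m"
  shows "limsup f \<le> limsup g"
  unfolding limsup_INF_SUP
proof (rule INF_greatest)
  fix M :: nat
  obtain N where N: "\<forall>n\<ge>N. \<exists>m\<ge>M. f n \<le> g m" using assms by blast
  have "(SUP n\<in>{N..}. f n) \<le> (SUP m\<in>{M..}. g m)"
  proof (rule SUP_least)
    fix n assume "n \<in> {N..}"
    then obtain m where "m \<ge> M" "f n \<le> g m" using N by auto
    then show "f n \<le> (SUP m\<in>{M..}. g m)" by (auto intro: SUP_upper2)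
  qed
  then show "(INF n. SUP m\<in>{n..}. f m) \<le> (SUP m\<in>{M..}. g m)"
    by (rule INF_lower2[OF UNIV_I])
qed

lemma liminf_le_limsup_freq:
  fixes f g :: "nat \<Rightarrow> ereal"
  assumes "\<forall>M N. \<exists>n\<ge>N. \<exists>m\<ge>M. g m \<le> f n"
  shows "liminf g \<le> limsup f"
  unfolding liminf_SUP_INF limsup_INF_SUP
proof (rule SUP_least, rule INF_greatest)
  fix M N :: nat
  obtain n m where "n \<ge> N" "m \<ge> M" "g m \<le> f n" using assms by blast
  then have "(INF m\<in>{M..}. g m) \<le> f n" by (auto intro: INF_lower2)
  also have "\<dots> \<le> (SUP n\<in>{N..}. f n)" using \<open>n \<ge> N\<close> by (auto intro: SUP_upper2)
  finally show "(INF m\<in>{M..}. g m) \<le> (SUP n\<in>{N..}. f n)" .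
qed

lemma digit_zero_step:
  fixes s :: nat and z :: real
  assumes "s \<ge> 2" "\<lfloor>real s * z\<rfloor> mod int s = 0"
  shows "frac (real s * z) = real s * frac z \<and> real s * frac z < 1"
proof -
  define q where "q = \<lfloor>z\<rfloor>"
  define t where "t = frac z"
  have t: "0 \<le> t" "t < 1" using frac_lt_1 by (auto simp: t_def)
  have z: "real s * z = of_int (int s * q) + real s * t"
    by (simp add: q_def t_def frac_def algebra_simps)
  have fl: "\<lfloor>real s * z\<rfloor> = int s * q + \<lfloor>real s * t\<rfloor>"
    unfolding z by (metis add.commute floor_add_int)
  have r0: "0 \<le> \<lfloor>real s * t\<rfloor>" using t by simp
  have "real s * t < real s" using t assms by simp
  then have r1: "\<lfloor>real s * t\<rfloor> < int s" by (simp add: floor_less_iff)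
  have "(int s * q + \<lfloor>real s * t\<rfloor>) mod int s = \<lfloor>real s * t\<rfloor>"
    using r0 r1 by (simp add: mod_pos_pos_trivial)
  then have "\<lfloor>real s * t\<rfloor> = 0" using assms(2) fl by simp
  then have st: "real s * t < 1" by (simp add: floor_eq_iff)
  have "frac (real s * z) = real s * z - \<lfloor>real s * z\<rfloor>" by (simp add: frac_def)
  also have "\<dots> = real s * t" using fl \<open>\<lfloor>real s * t\<rfloor> = 0\<close> z by simp
  finally show ?thesis using st by (simp add: t_def)
qed




lemma frac_iter:
  fixes s N :: nat and x :: real
  assumes "s \<ge> 2" "\<forall>n>N. digit s x n = 0"
  shows "frac (real s ^ (N + j) * x) = real s ^ j * frac (real s ^ N * x)"
proof (induction j)
  case 0 then show ?case by simp
next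
  case (Suc j)
  have "digit s x (Suc (N + j)) = 0" using assms(2) by simp
  then have d: "\<lfloor>real s * (real s ^ (N + j) * x)\<rfloor> mod int s = 0"
    by (simp add: digit_def mult.assoc)
  have "frac (real s ^ (N + Suc j) * x) = frac (real s * (real s ^ (N + j) * x))"
    by (simp add: mult.assoc)
  also have "\<dots> = real s * frac (real s ^ (N + j) * x)"
    using digit_zero_step[OF assms(1) d] by blast
  also have "\<dots> = real s ^ Suc j * frac (real s ^ N * x)" using Suc by simp
  finally show ?case .
qed

lemma rat_of_digits:
  fixes s N :: nat and x :: real
  assumes "s \<ge> 2" "\<forall>n>N. digit s x n = 0"
  shows "x \<in> \<rat>"
proof -
  define f where "f = frac (real s ^ N * x)"
  have f0: "f \<ge> 0" by (simp add: f_def)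
  have "f = 0"
  proof (rule ccontr)
    assume "f \<noteq> 0"
    then have "f > 0" using f0 by simp
    have "1 < real s" using assms by simp
    then obtain j where "1 / f < real s ^ j" using real_arch_pow by blast
    then have "1 < real s ^ j * f" using \<open>f > 0\<close> by (simp add: field_simps)
    moreover have "real s ^ j * f < 1"
      using frac_iter[OF assms, of j] frac_lt_1[of "real s ^ (N + j) * x"] by (simp add: f_def)
    ultimately show False by simp
  qed
  then have "real s ^ N * x = of_int \<lfloor>real s ^ N * x\<rfloor>" by (simp add: f_def frac_def)
  then have "x = of_int \<lfloor>real s ^ N * x\<rfloor> / real s ^ N" using assms(1)
    by (simp add: field_simps)
  also have "\<dots> \<in> \<rat>" by (intro Rats_divide Rats_of_int Rats_power) simp
  finally show ?thesis .
qed

lemma infinite_nzpos: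
  fixes s :: nat and x :: real
  assumes "s \<ge> 2" "x \<notin> \<rat>"
  shows "infinite (nzpos s x)"
proof
  assume "finite (nzpos s x)"
  then obtain N where N: "\<forall>n\<in>nzpos s x. n \<le> N" using finite_nat_set_iff_bounded_le by blast
  have "\<forall>n>N. digit s x n = 0"
  proof (intro allI impI)
    fix n assume "n > N"
    then have "n \<notin> nzpos s x" using N by force
    then show "digit s x n = 0" using \<open>n > N\<close> by (simp add: nzpos_def)
  qed
  then show False using rat_of_digits[OF assms(1)] assms(2) by blast
qed




lemma enum_next:
  fixes S :: "nat set"
  assumes "infinite S" "y \<in> S" "enumerate S n < y"
  shows "enumerate S (Suc n) \<le> y"
proof -
  obtain t where t: "enumerate S t = y" using enumerate_Ex[OF assms(1,2)] by blast
  then have "n < t" using assms by (metis enumerate_mono_iff)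
  then show ?thesis using t assms(1) by (metis enumerate_mono_le_iff Suc_leI)
qed

lemma upper_comb:
  fixes A U :: "nat set"
  assumes "infinite A" "A \<subseteq> U" "0 \<notin> U"
  shows "\<forall>M. \<exists>N. \<forall>n\<ge>N. \<exists>m\<ge>M. real (enumerate U (Suc n)) / real (enumerate U n)
           \<le> real (enumerate A (Suc m)) / real (enumerate A m)"
proof
  fix M
  have iU: "infinite U" using assms(1,2) finite_subset by blast
  show "\<exists>N. \<forall>n\<ge>N. \<exists>m\<ge>M. real (enumerate U (Suc n)) / real (enumerate U n)
           \<le> real (enumerate A (Suc m)) / real (enumerate A m)"
  proof (rule exI[of _ "enumerate A M"], intro allI impI)
    fix n assume n: "enumerate A M \<le> n"
    define x where "x = enumerate U n"
    have "n \<le> x" unfolding x_def by (rule le_enumerate[OF iU])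
    define T where "T = {m. enumerate A m \<le> x}"
    have Tsub: "T \<subseteq> {..x}" unfolding T_def using le_enumerate[OF assms(1)] order_trans by fastforce
    then have fT: "finite T" using finite_subset by blast
    have MT: "M \<in> T" unfolding T_def using n \<open>n \<le> x\<close> by simp
    define m where "m = Max T"
    have mT: "m \<in> T" unfolding m_def using fT MT Max_in by blast
    have Mm: "M \<le> m" unfolding m_def using fT MT by simp
    have "Suc m \<notin> T" using fT m_def by (metis Max_ge Suc_n_not_le_n)
    then have gt: "x < enumerate A (Suc m)" unfolding T_def by simp
    have le: "enumerate A m \<le> x" using mT T_def by simp
    have inU: "enumerate A (Suc m) \<in> U" using enumerate_in_set[OF assms(1)] assms(2) by blast
    have b1: "enumerate U (Suc n) \<le> enumerate A (Suc m)"
      using enum_next[OF iU inU] gt x_def by simp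
    have a0: "0 < enumerate A m"
      using enumerate_in_set[OF assms(1)] assms(2,3) by (metis gr0I subsetD)
    have "real (enumerate U (Suc n)) / real x \<le> real (enumerate A (Suc m)) / real x"
      using b1 by (simp add: divide_right_mono)
    also have "\<dots> \<le> real (enumerate A (Suc m)) / real (enumerate A m)"
      using a0 le by (intro divide_left_mono) auto
    finally show "\<exists>m\<ge>M. real (enumerate U (Suc n)) / real (enumerate U n)
           \<le> real (enumerate A (Suc m)) / real (enumerate A m)"
      using Mm x_def by blast
  qed
qed




lemma prod_bound:
  fixes b :: "nat \<Rightarrow> nat" and Mx :: real
  assumes "\<forall>t. 0 < b t" "\<forall>j\<in>{p..<q}. real (b (Suc j)) / real (b j) \<le> Mx"
  shows "d \<le> q - p \<Longrightarrow> real (b (p + d)) \<le> Mx ^ d * real (b p)"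
proof (induction d)
  case 0 then show ?case by simp
next
  case (Suc d)
  have pos: "0 < real (b (p + d))" using assms(1) by simp
  have r: "real (b (Suc (p + d))) / real (b (p + d)) \<le> Mx" using assms(2) Suc.prems by simp
  then have "Mx \<ge> 0" using pos by (meson divide_nonneg_nonneg of_nat_0_le_iff order_trans)
  have "real (b (p + Suc d)) = (real (b (Suc (p + d))) / real (b (p + d))) * real (b (p + d))"
    using pos by simp
  also have "\<dots> \<le> Mx * (Mx ^ d * real (b p))"
    using r Suc pos \<open>Mx \<ge> 0\<close> by (intro mult_mono) auto
  finally show ?case by simp
qed

lemma lower_comb:
  fixes A :: "nat \<Rightarrow> nat set" and k n :: nat
  assumes k: "k \<ge> 1" and inf: "\<forall>i\<in>{1..k}. infinite (A i)"
    and z: "0 \<notin> (\<Union>i\<in>{1..k}. A i)"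
  shows "\<exists>i\<in>{1..k}. \<exists>m j. n \<le> enumerate (A i) m \<and> n \<le> j \<and>
     (real (enumerate (A i) (Suc m)) / real (enumerate (A i) m)) powr (1 / real k)
       \<le> real (enumerate (\<Union>i\<in>{1..k}. A i) (Suc j)) / real (enumerate (\<Union>i\<in>{1..k}. A i) j)"
proof -
  define U where "U = (\<Union>i\<in>{1..k}. A i)"
  define b where "b = enumerate U"
  have iU: "infinite U" unfolding U_def using inf k
    by (metis (no_types, lifting) UN_I atLeastAtMost_iff finite_UN finite_atLeastAtMost order_refl)
  have bU: "b t \<in> U" for t unfolding b_def using enumerate_in_set[OF iU] .
  have bpos: "\<forall>t. 0 < b t" using bU z U_def by (metis gr0I)
  have bmono: "b t < b (Suc t)" for t unfolding b_def using enumerate_step[OF iU] .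
  define I where "I p = (SOME i. i \<in> {1..k} \<and> b p \<in> A i)" for p
  have I: "I p \<in> {1..k} \<and> b p \<in> A (I p)" for p
  proof -
    have "\<exists>i. i \<in> {1..k} \<and> b p \<in> A i" using bU[of p] U_def by blast
    then show ?thesis unfolding I_def by (rule someI_ex)
  qed
  have "\<not> inj_on I {n..n+k}"
  proof
    assume "inj_on I {n..n+k}"
    then have "card {n..n+k} \<le> card {1..k}"
      using I by (intro card_inj_on_le) auto
    then show False by simp
  qed
  then obtain p q where pq: "p \<in> {n..n+k}" "q \<in> {n..n+k}" "p < q" "I p = I q"
    unfolding inj_on_def by (metis linorder_neqE_nat)
  define i where "i = I p"
  have i: "i \<in> {1..k}" "b p \<in> A i" "b q \<in> A i" using I pq i_def by metis+
  have iA: "infinite (A i)" using inf i by blast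
  obtain m where m: "enumerate (A i) m = b p" using enumerate_Ex[OF iA i(2)] by blast
  have bpq: "b p < b q" using pq(3) unfolding b_def by (simp add: iU)
  have am1: "enumerate (A i) (Suc m) \<le> b q" using enum_next[OF iA i(3)] m bpq by simp
  have nb: "n \<le> b p" using le_enumerate[OF iU, of p] pq(1) b_def by simp
  define Mx where "Mx = Max ((\<lambda>j. real (b (Suc j)) / real (b j)) ` {p..<q})"
  have fin: "finite ((\<lambda>j. real (b (Suc j)) / real (b j)) ` {p..<q})" by simp
  have ne: "(\<lambda>j. real (b (Suc j)) / real (b j)) ` {p..<q} \<noteq> {}" using pq by simp
  obtain j where j: "j \<in> {p..<q}" "Mx = real (b (Suc j)) / real (b j)"
    using Max_in[OF fin ne] Mx_def by auto
  have Mxge: "\<forall>j'\<in>{p..<q}. real (b (Suc j')) / real (b j') \<le> Mx"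
    unfolding Mx_def using fin by auto
  have Mx1: "1 \<le> Mx" using j bmono[of j] bpos by simp
  have "real (b (p + (q - p))) \<le> Mx ^ (q - p) * real (b p)"
    using prod_bound[OF bpos Mxge] by simp
  then have bq: "real (b q) \<le> Mx ^ (q - p) * real (b p)" using pq by simp
  have "Mx ^ (q - p) \<le> Mx ^ k" using Mx1 pq by (intro power_increasing) auto
  then have bq2: "real (b q) \<le> Mx ^ k * real (b p)" using bq bpos
    by (meson mult_right_mono of_nat_0_le_iff order_trans)
  have ap: "0 < real (b p)" using bpos by simp
  have ratio: "real (enumerate (A i) (Suc m)) / real (enumerate (A i) m) \<le> Mx ^ k"
    using am1 bq2 ap m by (simp add: divide_le_eq)
  have "(real (enumerate (A i) (Suc m)) / real (enumerate (A i) m)) powr (1 / real k)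
        \<le> (Mx ^ k) powr (1 / real k)"
    using ratio by (intro powr_mono2) auto
  also have "\<dots> = Mx"
    using Mx1 k by (simp add: powr_realpow[symmetric] powr_powr)
  finally show ?thesis using i(1) m nb j pq
    unfolding U_def[symmetric] b_def[symmetric]
    by (intro bexI[of _ i] exI[of _ m] exI[of _ j]) auto
qed




theorem lemma2p4:
  fixes k s :: nat and \<zeta> :: "nat \<Rightarrow> real"
  assumes "k \<ge> 1"
    and "\<forall>i\<in>{1..k}. 0 < \<zeta> i \<and> \<zeta> i < 1"
    and "\<forall>c :: nat \<Rightarrow> real. (\<forall>i\<in>{0..k}. c i \<in> \<rat>) \<and> c 0 + (\<Sum>i=1..k. c i * \<zeta> i) = 0
            \<longrightarrow> (\<forall>i\<in>{0..k}. c i = 0)"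
    and "s \<ge> 2"
  shows "Min ((\<lambda>i. liminf (\<lambda>n. ereal ((real (apos s (\<zeta> i) (Suc n)) / real (apos s (\<zeta> i) n)) powr (1 / real k)))) ` {1..k})
           \<le> limsup (\<lambda>n. ereal (real (bpos s k \<zeta> (Suc n)) / real (bpos s k \<zeta> n)))
       \<and> limsup (\<lambda>n. ereal (real (bpos s k \<zeta> (Suc n)) / real (bpos s k \<zeta> n)))
           \<le> Min ((\<lambda>i. limsup (\<lambda>n. ereal (real (apos s (\<zeta> i) (Suc n)) / real (apos s (\<zeta> i) n)))) ` {1..k})"
proof -
  define A where "A i = nzpos s (\<zeta> i)" for i
  define U where "U = (\<Union>i\<in>{1..k}. A i)"
  have irr: "\<zeta> i \<notin> \<rat>" if i: "i \<in> {1..k}" for i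
  proof
    assume r: "\<zeta> i \<in> \<rat>"
    define c where "c j = (if j = 0 then - \<zeta> i else if j = i then 1 else 0)" for j
    have "(\<Sum>j=1..k. c j * \<zeta> j) = (\<Sum>j=1..k. (if j = i then \<zeta> i else 0))"
      by (rule sum.cong) (auto simp: c_def)
    also have "\<dots> = \<zeta> i" using i by simp
    finally have "c 0 + (\<Sum>j=1..k. c j * \<zeta> j) = 0" by (simp add: c_def)
    moreover have "\<forall>j\<in>{0..k}. c j \<in> \<rat>" using r by (simp add: c_def)
    ultimately have "\<forall>j\<in>{0..k}. c j = 0" using assms(3)[rule_format, of c] by blast
    then have "c i = 0" using i by auto
    then show False using i by (simp add: c_def)
  qed
  have inf: "\<forall>i\<in>{1..k}. infinite (A i)"
    using infinite_nzpos[OF assms(4)] irr unfolding A_def by blast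
  have z: "0 \<notin> U" unfolding U_def A_def nzpos_def by auto
  have ap: "apos s (\<zeta> i) = enumerate (A i)" for i by (simp add: apos_def A_def)
  have bp: "bpos s k \<zeta> = enumerate U" by (simp add: bpos_def U_def A_def)
  define B where "B j = ereal (real (enumerate U (Suc j)) / real (enumerate U j))" for j
  have fin: "finite {1..k}" "{1..k} \<noteq> ({}::nat set)" using assms(1) by auto
  define P where "P i n = (\<exists>m j. n \<le> enumerate (A i) m \<and> n \<le> j \<and>
     (real (enumerate (A i) (Suc m)) / real (enumerate (A i) m)) powr (1 / real k)
       \<le> real (enumerate U (Suc j)) / real (enumerate U j))" for i n
  have allP: "\<forall>n. \<exists>i\<in>{1..k}. P i n"
  proof
    fix n
    show "\<exists>i\<in>{1..k}. P i n"
      using lower_comb[OF assms(1) inf z[unfolded U_def], of n] unfolding P_def U_def .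
  qed
  have "\<exists>i\<in>{1..k}. \<forall>N. \<exists>n\<ge>N. P i n"
  proof (rule ccontr)
    assume "\<not> ?thesis"
    then have "\<forall>i\<in>{1..k}. \<exists>N. \<forall>n\<ge>N. \<not> P i n" by blast
    from bchoice[OF this] obtain Nf where Nf: "\<forall>i\<in>{1..k}. \<forall>n\<ge>Nf i. \<not> P i n" by blast
    define N where "N = Max (Nf ` {1..k})"
    obtain i where "i \<in> {1..k}" "P i N" using allP by blast
    moreover have "Nf i \<le> N" using \<open>i \<in> {1..k}\<close> fin N_def by simp
    ultimately show False using Nf by blast
  qed
  then obtain i where i: "i \<in> {1..k}" "\<forall>N. \<exists>n\<ge>N. P i n" by blast
  have iA: "infinite (A i)" using inf i by blast
  have li: "liminf (\<lambda>n. ereal ((real (enumerate (A i) (Suc n)) / real (enumerate (A i) n)) powr (1 / real k)))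
        \<le> limsup B"
  proof (rule liminf_le_limsup_freq, intro allI)
    fix M N
    obtain n where n: "n \<ge> max N (Suc (enumerate (A i) M))" "P i n" using i by blast
    then obtain m j where mj: "n \<le> enumerate (A i) m" "n \<le> j"
       "(real (enumerate (A i) (Suc m)) / real (enumerate (A i) m)) powr (1 / real k)
       \<le> real (enumerate U (Suc j)) / real (enumerate U j)" unfolding P_def by blast
    have "enumerate (A i) M < enumerate (A i) m" using n mj by simp
    then have "M \<le> m" using iA by simp
    then show "\<exists>j\<ge>N. \<exists>m\<ge>M. ereal ((real (enumerate (A i) (Suc m)) / real (enumerate (A i) m)) powr (1 / real k)) \<le> B j"
      using mj n unfolding B_def by (intro exI[of _ j] conjI exI[of _ m]) auto
  qed
  have low: "Min ((\<lambda>i. liminf (\<lambda>n. ereal ((real (apos s (\<zeta> i) (Suc n)) / real (apos s (\<zeta> i) n)) powr (1 / real k)))) ` {1..k})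
           \<le> limsup B"
    unfolding ap by (rule order_trans[OF Min_le li]) (use i fin in auto)
  have up1: "limsup B \<le> limsup (\<lambda>n. ereal (real (apos s (\<zeta> i) (Suc n)) / real (apos s (\<zeta> i) n)))"
    if i: "i \<in> {1..k}" for i
  proof -
    have "A i \<subseteq> U" using i U_def by blast
    from upper_comb[OF _ this z] inf i
    have c: "\<forall>M. \<exists>N. \<forall>n\<ge>N. \<exists>m\<ge>M. B n \<le> ereal (real (enumerate (A i) (Suc m)) / real (enumerate (A i) m))"
      unfolding B_def by simp
    show ?thesis
      unfolding ap by (rule limsup_le_shift[OF c])
  qed
  have up: "limsup B \<le> Min ((\<lambda>i. limsup (\<lambda>n. ereal (real (apos s (\<zeta> i) (Suc n)) / real (apos s (\<zeta> i) n)))) ` {1..k})"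
    using fin up1 by (intro Min.boundedI) auto
  show ?thesis using low up unfolding bp B_def by simp
qed


end
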